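(* There exists a constant $c>0$ depending only on $m$ such that for every $r>0$ and every $\delta$ with $0<\delta<\lambda_m(r)$, there exists $N(r,\delta)\in\mathbb N$ such that for every $n\ge N(r,\delta)$, \[P\left(\inf_{|t|\ge r}L_n(t)<F_m(0)+\delta\right)\le2\exp\left(-\frac{\delta^2}{8c}n\right).\]
   Context: Fix $m>1/2$. Let $c_m:=\left(\int_{\mathbb R}(1+x^2)^{-m}dx\right)^{-1}$ and $\nu_m(dx):=c_m(1+x^2)^{-m}dx$. Let $(X_n)_{n\ge1}$ be i.i.d. random variables on $(\Omega,\mathcal F,P)$ with law $\nu_m$. Let $L_n(t):=\frac1n\sum_{i=1}^n\log(1+(X_i-t)^2)$ and $F_m(t):=\int_{\mathbb R}\log(1+(x-t)^2)\,\nu_m(dx)$ for $t\in\mathbb R$. For $r>0$ let $\lambda_m(r):=\frac12\min\left\{\frac12\left(m-\frac12\right),\ \frac{F_m(r)-F_m(0)}{4}\right\}$. *)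

theory Defs
  imports "HOL-Probability.Probability"
begin

definition cm :: "real \<Rightarrow> real" where
  "cm m = 1 / (LINT x|lborel. (1 + x\<^sup>2) powr (- m))"

definition nu :: "real \<Rightarrow> real measure" where
  "nu m = density lborel (\<lambda>x. ennreal (cm m * (1 + x\<^sup>2) powr (- m)))"

definition Fm :: "real \<Rightarrow> real \<Rightarrow> real" where
  "Fm m t = (LINT x|nu m. ln (1 + (x - t)\<^sup>2))"

text \<open>Empirical criterion; the random variables are indexed from 1.\<close>
definition Ln :: "(nat \<Rightarrow> 'a \<Rightarrow> real) \<Rightarrow> nat \<Rightarrow> real \<Rightarrow> 'a \<Rightarrow> real" where
  "Ln X n t \<omega> = (1 / real n) * (\<Sum>i=1..n. ln (1 + (X i \<omega> - t)\<^sup>2))"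

definition lam :: "real \<Rightarrow> real \<Rightarrow> real" where
  "lam m r = (1/2) * min ((1/2) * (m - 1/2)) ((Fm m r - Fm m 0) / 4)"

end

theory Submission
  imports Defs
begin


lemma pw_bound:
  fixes x a :: real assumes "a \<ge> 0" "\<bar>x\<bar> \<ge> 1"
  shows "(1+x\<^sup>2) powr (-a) \<le> \<bar>x\<bar> powr (-2*a)"
proof -
  have xx: "\<bar>x\<bar> powr 2 = x\<^sup>2" using assms by (simp add: powr_realpow)
  have "(1+x\<^sup>2) powr (-a) \<le> (\<bar>x\<bar> powr 2) powr (-a)"
    unfolding xx using assms by (intro powr_mono2') (auto simp: abs_square_le_1)
  also have "\<dots> = \<bar>x\<bar> powr (-2*a)" unfolding powr_powr by simp
  finally show ?thesis .
qed

lemma int_decay: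
  fixes a :: real assumes "a > 1/2"
  shows "integrable lborel (\<lambda>x::real. (1+x\<^sup>2) powr (-a))"
proof -
  have e: "-2*a < -1" using assms by simp
  have "(\<lambda>x::real. x powr (-2*a)) integrable_on {1..}"
    using has_integral_powr_to_inf[OF e, of 1] by (auto simp: integrable_on_def)
  hence "(\<lambda>x::real. x powr (-2*a)) absolutely_integrable_on {1..}"
    by (rule nonnegative_absolutely_integrable_1) simp
  hence i1: "integrable lborel (\<lambda>x::real. indicator {1..} x * x powr (-2*a))"
    unfolding set_integrable_def
    by (subst (asm) integrable_completion) auto
  have i2: "integrable lborel (\<lambda>x::real. indicator {1..} (-x) * (-x) powr (-2*a))"
    using i1 lborel_integrable_real_affine_iff[of "-1" "\<lambda>x. indicator {1..} x * x powr (-2*a)" 0]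
    by simp
  have i3: "integrable lborel (\<lambda>x::real. indicator {-1..1} x :: real)"
    by (intro integrable_real_indicator) auto
  have i: "integrable lborel (\<lambda>x::real. indicator {1..} x * x powr (-2*a)
     + indicator {1..} (-x) * (-x) powr (-2*a) + indicator {-1..1} x)"
    using i1 i2 i3 by (intro Bochner_Integration.integrable_add) 
  show ?thesis
  proof (rule Bochner_Integration.integrable_bound[OF i])
    show "(\<lambda>x::real. (1+x\<^sup>2) powr (-a)) \<in> borel_measurable lborel" by measurable
    show "AE x in lborel. norm ((1+x\<^sup>2) powr (-a)) \<le> norm (indicator {1..} x * x powr (-2*a)
     + indicator {1..} (-x) * (-x) powr (-2*a) + indicator {-1..1} x :: real)"
    proof (intro AE_I2)
      fix x :: real
      consider "x \<ge> 1" | "x \<le> -1" | "-1 < x \<and> x < 1" by linarith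
      then show "norm ((1+x\<^sup>2) powr (-a)) \<le> norm (indicator {1..} x * x powr (-2*a)
     + indicator {1..} (-x) * (-x) powr (-2*a) + indicator {-1..1} x :: real)"
      proof cases
        case 1 then show ?thesis using pw_bound[of a x] assms by (auto simp: indicator_def)
      next
        case 2 then show ?thesis using pw_bound[of a x] assms by (auto simp: indicator_def)
      next
        case 3
        have "(1+x\<^sup>2) powr (-a) \<le> 1 powr (-a)" using assms
          by (intro powr_mono2') auto
        hence "(1+x\<^sup>2) powr (-a) \<le> 1" by simp
        then show ?thesis using 3 by (auto simp: indicator_def)
      qed
    qed
  qed
qed


lemma exp_neg_le_quad:
  fixes u :: real assumes "u \<ge> 0"
  shows "exp (-u) \<le> 1 - u + u\<^sup>2/2"
proof -
  define g where "g u = 1 - u + u\<^sup>2/2 - exp (-u)" for u :: real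
  have d: "(g has_real_derivative (-1 + x + exp (-x))) (at x)" for x
    unfolding g_def by (auto intro!: derivative_eq_intros simp: power2_eq_square)
  have "g 0 \<le> g u"
  proof (rule DERIV_nonneg_imp_nondecreasing[OF assms])
    fix x assume "0 \<le> x" "x \<le> u"
    have "1 + (-x) \<le> exp (-x)" by (rule exp_ge_add_one_self)
    then show "\<exists>y. DERIV g x :> y \<and> 0 \<le> y" using d by (intro exI[of _ "-1 + x + exp (-x)"]) auto
  qed
  then show ?thesis by (simp add: g_def)
qed

lemma (in prob_space) chernoff_lower:
  fixes Y :: "'i \<Rightarrow> 'a \<Rightarrow> real"
  assumes fin: "finite I" and ne: "I \<noteq> {}" and indep: "indep_vars (\<lambda>_. borel) Y I"
    and nn: "\<And>i x. i \<in> I \<Longrightarrow> 0 \<le> Y i x"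
    and int1: "\<And>i. i \<in> I \<Longrightarrow> integrable M (Y i)"
    and int2: "\<And>i. i \<in> I \<Longrightarrow> integrable M (\<lambda>x. (Y i x)\<^sup>2)"
    and var: "\<And>i. i \<in> I \<Longrightarrow> expectation (\<lambda>x. (Y i x)\<^sup>2) \<le> \<sigma>"
    and sig: "\<sigma> > 0" and eps: "\<epsilon> > 0"
  shows "prob {x\<in>space M. (\<Sum>i\<in>I. Y i x) \<le> (\<Sum>i\<in>I. expectation (Y i)) - \<epsilon>}
           \<le> exp (- (\<epsilon>\<^sup>2 / (2 * real (card I) * \<sigma>)))"
proof -
  define n where "n = real (card I)"
  have n: "n > 0" using fin ne by (simp add: n_def card_gt_0_iff)
  define s where "s = \<epsilon> / (n * \<sigma>)"
  have s: "s > 0" using n sig eps by (simp add: s_def)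
  define \<mu> where "\<mu> = (\<Sum>i\<in>I. expectation (Y i))"
  have rv[measurable]: "Y i \<in> borel_measurable M" if "i \<in> I" for i
    using indep that unfolding indep_vars_def by blast
  have "ennreal (prob {x\<in>space M. (\<Sum>i\<in>I. Y i x) \<le> \<mu> - \<epsilon>})
        = emeasure M {x\<in>space M. (\<Sum>i\<in>I. Y i x) \<le> \<mu> - \<epsilon>}"
    by (simp add: emeasure_eq_measure)
  also have "\<dots> \<le> ennreal (exp (s * (\<mu> - \<epsilon>))) *
       (\<integral>\<^sup>+x. ennreal (exp (-s * (\<Sum>i\<in>I. Y i x))) * indicator (space M) x \<partial>M)"
    by (intro Chernoff_ineq_nn_integral_le s) (auto intro!: borel_measurable_sum)
  also have "(\<integral>\<^sup>+x. ennreal (exp (-s * (\<Sum>i\<in>I. Y i x))) * indicator (space M) x \<partial>M)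
      = (\<integral>\<^sup>+x. (\<Prod>i\<in>I. ennreal (exp (-s * Y i x))) \<partial>M)"
    by (intro nn_integral_cong)
       (simp_all add: sum_distrib_left exp_sum fin prod_ennreal)
  also have "\<dots> = (\<Prod>i\<in>I. \<integral>\<^sup>+x. ennreal (exp (-s * Y i x)) \<partial>M)"
    by (intro indep_vars_nn_integral fin indep_vars_compose2[OF indep]) auto
  also have "ennreal (exp (s * (\<mu> - \<epsilon>))) * \<dots> \<le>
      ennreal (exp (s * (\<mu> - \<epsilon>))) * (\<Prod>i\<in>I. ennreal (exp (- s * expectation (Y i) + s\<^sup>2 * \<sigma> / 2)))"
  proof (intro mult_left_mono prod_mono_ennreal)
    fix i assume i: "i \<in> I"
    have bnd: "integrable M (\<lambda>x. exp (-s * Y i x))"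
      by (rule integrable_const_bound[where B=1]) (use i nn s in auto)
    have "(\<integral>\<^sup>+x. ennreal (exp (-s * Y i x)) \<partial>M) = ennreal (expectation (\<lambda>x. exp (-s * Y i x)))"
      using bnd by (intro nn_integral_eq_integral) auto
    also have "expectation (\<lambda>x. exp (-s * Y i x)) \<le> expectation (\<lambda>x. 1 - s * Y i x + s\<^sup>2/2 * (Y i x)\<^sup>2)"
    proof (rule integral_mono[OF bnd])
      show "integrable M (\<lambda>x. 1 - s * Y i x + s\<^sup>2/2 * (Y i x)\<^sup>2)"
        using int1[OF i] int2[OF i] by auto
      fix x assume "x \<in> space M"
      show "exp (-s * Y i x) \<le> 1 - s * Y i x + s\<^sup>2/2 * (Y i x)\<^sup>2"
        using exp_neg_le_quad[of "s * Y i x"] nn[OF i, of x] s by (simp add: power_mult_distrib)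
    qed
    also have "\<dots> = 1 - s * expectation (Y i) + s\<^sup>2/2 * expectation (\<lambda>x. (Y i x)\<^sup>2)"
      using int1[OF i] int2[OF i] by (simp add: prob_space)
    also have "\<dots> \<le> 1 + (- s * expectation (Y i) + s\<^sup>2 * \<sigma> / 2)"
      using var[OF i] s by (simp add: mult_left_mono)
    also have "\<dots> \<le> exp (- s * expectation (Y i) + s\<^sup>2 * \<sigma> / 2)"
      by (rule exp_ge_add_one_self)
    finally show "(\<integral>\<^sup>+x. ennreal (exp (-s * Y i x)) \<partial>M) \<le> ennreal (exp (- s * expectation (Y i) + s\<^sup>2 * \<sigma> / 2))"
      by (simp add: ennreal_leI)
  qed auto
  also have "\<dots> = ennreal (exp (s * (\<mu> - \<epsilon>)) * (\<Prod>i\<in>I. exp (- s * expectation (Y i) + s\<^sup>2 * \<sigma> / 2)))"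
    by (simp add: prod_ennreal prod_nonneg flip: ennreal_mult)
  also have "exp (s * (\<mu> - \<epsilon>)) * (\<Prod>i\<in>I. exp (- s * expectation (Y i) + s\<^sup>2 * \<sigma> / 2))
       = exp (s * (\<mu> - \<epsilon>) + (\<Sum>i\<in>I. - s * expectation (Y i) + s\<^sup>2 * \<sigma> / 2))"
    by (simp add: exp_sum fin exp_add)
  also have "(\<Sum>i\<in>I. - s * expectation (Y i) + s\<^sup>2 * \<sigma> / 2) = - s * \<mu> + n * (s\<^sup>2 * \<sigma> / 2)"
    by (simp add: sum.distrib \<mu>_def sum_distrib_left n_def sum_negf sum_subtractf)
  also have "s * (\<mu> - \<epsilon>) + (- s * \<mu> + n * (s\<^sup>2 * \<sigma> / 2)) = - (\<epsilon>\<^sup>2 / (2 * n * \<sigma>))"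
    using n sig by (simp add: s_def field_simps power2_eq_square)
  finally show ?thesis
    by (subst (asm) ennreal_le_iff) (auto simp: \<mu>_def n_def)
qed


definition dens :: "real \<Rightarrow> real \<Rightarrow> real" where
  "dens m x = cm m * (1 + x\<^sup>2) powr (- m)"

lemma cm_nonneg: "cm m \<ge> 0"
  unfolding cm_def by (simp add: integral_nonneg)

lemma dens_nonneg: "dens m x \<ge> 0"
  unfolding dens_def using cm_nonneg by simp

lemma dens_mono:
  assumes "m \<ge> 0" "\<bar>u\<bar> \<le> \<bar>v\<bar>" shows "dens m v \<le> dens m u"
proof -
  have "u\<^sup>2 \<le> v\<^sup>2" using assms by (simp add: abs_le_square_iff)
  hence "(1 + v\<^sup>2) powr (- m) \<le> (1 + u\<^sup>2) powr (- m)"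
    using assms by (intro powr_mono2') (auto intro: add_pos_nonneg)
  thus ?thesis unfolding dens_def using cm_nonneg by (simp add: mult_left_mono)
qed

lemma nu_alt: "nu m = density lborel (\<lambda>x. ennreal (dens m x))"
  unfolding nu_def dens_def ..

lemma ln_le_powr:
  fixes u e :: real assumes "0 < u" "0 < e"
  shows "ln u \<le> u powr e / e"
proof -
  have "ln (u powr e) \<le> u powr e - 1" using assms by (intro ln_le_minus_one) auto
  hence "e * ln u \<le> u powr e" using assms by (simp add: ln_powr)
  thus ?thesis using assms by (simp add: field_simps)
qed

lemma ln_split:
  fixes x t :: real
  shows "ln (1 + (x - t)\<^sup>2) \<le> ln 2 + ln (1 + t\<^sup>2) + ln (1 + x\<^sup>2)"
proof -
  have "(x - t)\<^sup>2 \<le> 2 * x\<^sup>2 + 2 * t\<^sup>2"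
    using sum_squares_ge_zero[of "x + t" 0] by (simp add: power2_eq_square algebra_simps)
  moreover have "0 \<le> t\<^sup>2 * x\<^sup>2" by simp
  ultimately have "(x - t)\<^sup>2 \<le> 1 + (2 * t\<^sup>2 + (2 * x\<^sup>2 + 2 * (t\<^sup>2 * x\<^sup>2)))" by linarith
  hence "1 + (x - t)\<^sup>2 \<le> 2 * (1 + t\<^sup>2) * (1 + x\<^sup>2)"
    by (simp add: algebra_simps)
  hence "ln (1 + (x - t)\<^sup>2) \<le> ln (2 * (1 + t\<^sup>2) * (1 + x\<^sup>2))"
    by (intro ln_mono) (auto intro: add_pos_nonneg)
  also have "\<dots> = ln (2 * (1 + t\<^sup>2)) + ln (1 + x\<^sup>2)"
    by (rule ln_mult_pos) (auto intro: add_pos_nonneg)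
  also have "ln (2 * (1 + t\<^sup>2)) = ln 2 + ln (1 + t\<^sup>2)"
    by (rule ln_mult_pos) (auto intro: add_pos_nonneg)
  finally show ?thesis .
qed

lemma ln1p_sq_lip:
  fixes u v :: real
  shows "\<bar>ln (1 + u\<^sup>2) - ln (1 + v\<^sup>2)\<bar> \<le> \<bar>u - v\<bar>"
proof -
  have gen: "\<bar>ln (1 + b\<^sup>2) - ln (1 + a\<^sup>2)\<bar> \<le> b - a" if "a < b" for a b :: real
  proof -
    have "((\<lambda>x. ln (1 + x\<^sup>2)) has_real_derivative (2 * x / (1 + x\<^sup>2))) (at x)" for x :: real
      by (auto intro!: derivative_eq_intros simp: add_pos_nonneg power2_eq_square)
    from MVT2[OF that this] obtain z where z: "a < z" "z < b"
      "ln (1 + b\<^sup>2) - ln (1 + a\<^sup>2) = (b - a) * (2 * z / (1 + z\<^sup>2))" by blast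
    have sq: "0 \<le> (\<bar>z\<bar> - 1)\<^sup>2" by simp
    have "(\<bar>z\<bar> - 1)\<^sup>2 = \<bar>z\<bar>\<^sup>2 - 2 * \<bar>z\<bar> + 1" by (simp add: power2_diff)
    moreover have "\<bar>z\<bar>\<^sup>2 = z\<^sup>2" by simp
    moreover have "\<bar>2 * z\<bar> = 2 * \<bar>z\<bar>" by simp
    ultimately have l: "\<bar>2 * z\<bar> \<le> 1 + z\<^sup>2" using sq by linarith
    have p: "0 < 1 + z\<^sup>2" by (simp add: add_pos_nonneg)
    have "\<bar>2 * z / (1 + z\<^sup>2)\<bar> = \<bar>2 * z\<bar> / (1 + z\<^sup>2)" using p by simp
    also have "\<dots> \<le> 1" using l p by simp
    finally have "\<bar>2 * z / (1 + z\<^sup>2)\<bar> \<le> 1" .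
    hence w: "(b - a) * \<bar>2 * z / (1 + z\<^sup>2)\<bar> \<le> (b - a) * 1"
      using that by (intro mult_left_mono) auto
    have "\<bar>(b - a) * (2 * z / (1 + z\<^sup>2))\<bar> = (b - a) * \<bar>2 * z / (1 + z\<^sup>2)\<bar>"
      using that by (simp only: abs_mult)
    hence "\<bar>(b - a) * (2 * z / (1 + z\<^sup>2))\<bar> \<le> (b - a) * 1" using w by (rule ssubst)
    thus ?thesis using z by simp
  qed
  show ?thesis
  proof (cases u v rule: linorder_cases)
    case less then show ?thesis using gen[of u v] by (simp add: abs_minus_commute)
  next
    case greater then show ?thesis using gen[of v u] by simp
  qed simp
qed



lemma dens_meas[measurable]: "dens m \<in> borel_measurable borel"
  unfolding dens_def by measurable

lemma int_dens: assumes "m > 1/2" shows "integrable lborel (dens m)"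
  unfolding dens_def using int_decay[OF assms] by simp

lemma Y_bound:
  fixes x t e :: real assumes "e > 0"
  shows "ln (1 + (x - t)\<^sup>2) \<le> (ln 2 + ln (1 + t\<^sup>2)) + (1 + x\<^sup>2) powr e / e"
proof -
  have "ln (1 + x\<^sup>2) \<le> (1 + x\<^sup>2) powr e / e" using assms by (intro ln_le_powr) (auto intro: add_pos_nonneg)
  thus ?thesis using ln_split[of x t] by linarith
qed

lemma int_dens_Y2:
  assumes m: "m > 1/2"
  shows "integrable lborel (\<lambda>x. dens m x * (ln (1 + (x - t)\<^sup>2))\<^sup>2)"
proof -
  define e where "e = (m - 1/2) / 4"
  have e: "e > 0" using m by (simp add: e_def)
  define A where "A = ln 2 + ln (1 + t\<^sup>2)"
  have A: "A \<ge> 0" unfolding A_def by (simp add: add_nonneg_nonneg)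
  have i1: "integrable lborel (\<lambda>x::real. (1 + x\<^sup>2) powr (- m))" using int_decay m by blast
  have i2: "integrable lborel (\<lambda>x::real. (1 + x\<^sup>2) powr (- (m - 2 * e)))"
  proof (rule int_decay)
    show "m - 2 * e > 1/2" unfolding e_def using m by (simp add: field_simps)
  qed
  have i: "integrable lborel (\<lambda>x::real. cm m * (2 * A\<^sup>2 * (1 + x\<^sup>2) powr (- m) + 2 / e\<^sup>2 * (1 + x\<^sup>2) powr (- (m - 2 * e))))"
    using i1 i2 by auto
  show ?thesis
  proof (rule Bochner_Integration.integrable_bound[OF i])
    show "(\<lambda>x. dens m x * (ln (1 + (x - t)\<^sup>2))\<^sup>2) \<in> borel_measurable lborel"
      unfolding dens_def by measurable
    show "AE x in lborel. norm (dens m x * (ln (1 + (x - t)\<^sup>2))\<^sup>2)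
       \<le> norm (cm m * (2 * A\<^sup>2 * (1 + x\<^sup>2) powr (- m) + 2 / e\<^sup>2 * (1 + x\<^sup>2) powr (- (m - 2 * e))))"
    proof (intro AE_I2)
      fix x :: real
      define P where "P = (1 + x\<^sup>2) powr (- m)"
      define B where "B = (1 + x\<^sup>2) powr e / e"
      have P: "P \<ge> 0" unfolding P_def by simp
      have B: "B \<ge> 0" unfolding B_def using e by simp
      have Y0: "0 \<le> ln (1 + (x - t)\<^sup>2)" by simp
      have Y1: "ln (1 + (x - t)\<^sup>2) \<le> A + B" unfolding A_def B_def using Y_bound[OF e] by blast
      have "(ln (1 + (x - t)\<^sup>2))\<^sup>2 \<le> (A + B)\<^sup>2" using Y0 Y1 by (intro power_mono) auto
      also have "\<dots> \<le> 2 * A\<^sup>2 + 2 * B\<^sup>2"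
        using sum_squares_ge_zero[of "A - B" 0] by (simp add: power2_eq_square algebra_simps)
      finally have Y2: "(ln (1 + (x - t)\<^sup>2))\<^sup>2 \<le> 2 * A\<^sup>2 + 2 * B\<^sup>2" .
      have "P * B\<^sup>2 = (1 + x\<^sup>2) powr (- m) * ((1 + x\<^sup>2) powr e)\<^sup>2 / e\<^sup>2"
        unfolding P_def B_def by (simp add: power_divide)
      also have "((1 + x\<^sup>2) powr e)\<^sup>2 = (1 + x\<^sup>2) powr (2 * e)"
        by (simp add: power2_eq_square flip: powr_add)
      also have "(1 + x\<^sup>2) powr (- m) * (1 + x\<^sup>2) powr (2 * e) = (1 + x\<^sup>2) powr (- (m - 2 * e))"
        by (simp flip: powr_add)
      finally have PB: "P * B\<^sup>2 = (1 + x\<^sup>2) powr (- (m - 2 * e)) / e\<^sup>2" .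
      have "dens m x * (ln (1 + (x - t)\<^sup>2))\<^sup>2 = cm m * (P * (ln (1 + (x - t)\<^sup>2))\<^sup>2)"
        unfolding dens_def P_def by simp
      also have "\<dots> \<le> cm m * (P * (2 * A\<^sup>2 + 2 * B\<^sup>2))"
        using Y2 P cm_nonneg by (intro mult_left_mono) auto
      also have "P * (2 * A\<^sup>2 + 2 * B\<^sup>2) = 2 * A\<^sup>2 * P + 2 * (P * B\<^sup>2)"
        by (simp add: algebra_simps)
      also have "\<dots> = 2 * A\<^sup>2 * (1 + x\<^sup>2) powr (- m) + 2 / e\<^sup>2 * (1 + x\<^sup>2) powr (- (m - 2 * e))"
        unfolding PB by (simp add: P_def)
      finally have le: "dens m x * (ln (1 + (x - t)\<^sup>2))\<^sup>2 \<le> cm m * (2 * A\<^sup>2 * (1 + x\<^sup>2) powr (- m) + 2 / e\<^sup>2 * (1 + x\<^sup>2) powr (- (m - 2 * e)))" .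
      have nn: "0 \<le> dens m x * (ln (1 + (x - t)\<^sup>2))\<^sup>2" using dens_nonneg by simp
      show "norm (dens m x * (ln (1 + (x - t)\<^sup>2))\<^sup>2)
       \<le> norm (cm m * (2 * A\<^sup>2 * (1 + x\<^sup>2) powr (- m) + 2 / e\<^sup>2 * (1 + x\<^sup>2) powr (- (m - 2 * e))))"
        using le nn by simp
    qed
  qed
qed

lemma int_dens_Y:
  assumes m: "m > 1/2"
  shows "integrable lborel (\<lambda>x. dens m x * ln (1 + (x - t)\<^sup>2))"
proof (rule Bochner_Integration.integrable_bound)
  show "integrable lborel (\<lambda>x. dens m x + dens m x * (ln (1 + (x - t)\<^sup>2))\<^sup>2)"
    using int_dens[OF m] int_dens_Y2[OF m] by auto
  show "(\<lambda>x. dens m x * ln (1 + (x - t)\<^sup>2)) \<in> borel_measurable lborel"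
    unfolding dens_def by measurable
  show "AE x in lborel. norm (dens m x * ln (1 + (x - t)\<^sup>2)) \<le> norm (dens m x + dens m x * (ln (1 + (x - t)\<^sup>2))\<^sup>2)"
  proof (intro AE_I2)
    fix x
    define y where "y = ln (1 + (x - t)\<^sup>2)"
    have y: "0 \<le> y" unfolding y_def by simp
    have "2 * y \<le> 1 + y\<^sup>2" using sum_squares_ge_zero[of "y - 1" 0] by (simp add: power2_eq_square algebra_simps)
    hence "y \<le> 1 + y\<^sup>2" using y by linarith
    hence "dens m x * y \<le> dens m x * (1 + y\<^sup>2)" using dens_nonneg by (intro mult_left_mono) auto
    thus "norm (dens m x * ln (1 + (x - t)\<^sup>2)) \<le> norm (dens m x + dens m x * (ln (1 + (x - t)\<^sup>2))\<^sup>2)"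
      using y dens_nonneg[of m x] by (simp add: y_def[symmetric] algebra_simps)
  qed
qed

lemma nu_integrable_iff:
  fixes f :: "real \<Rightarrow> real"
  assumes [measurable]: "f \<in> borel_measurable borel"
  shows "integrable (nu m) f \<longleftrightarrow> integrable lborel (\<lambda>x. dens m x * f x)"
  unfolding nu_alt by (subst integrable_density) (auto simp: dens_def cm_nonneg)

lemma nu_integral:
  fixes f :: "real \<Rightarrow> real"
  assumes [measurable]: "f \<in> borel_measurable borel"
  shows "integral\<^sup>L (nu m) f = (\<integral>x. dens m x * f x \<partial>lborel)"
  unfolding nu_alt by (subst integral_density) (auto simp: dens_def cm_nonneg)

lemma Fm_alt: "Fm m t = (\<integral>x. dens m x * ln (1 + (x - t)\<^sup>2) \<partial>lborel)"
  unfolding Fm_def by (rule nu_integral) simp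



lemma Fm_even: "Fm m (- t) = Fm m t"
proof -
  have "Fm m (- t) = (\<integral>x. dens m x * ln (1 + (x + t)\<^sup>2) \<partial>lborel)"
    unfolding Fm_alt by simp
  also have "\<dots> = \<bar>-1\<bar> *\<^sub>R (\<integral>x. dens m (0 + (-1) * x) * ln (1 + ((0 + (-1) * x) + t)\<^sup>2) \<partial>lborel)"
    by (rule lborel_integral_real_affine) simp
  also have "\<dots> = Fm m t"
    unfolding Fm_alt by (simp add: dens_def power2_commute)
  finally show ?thesis .
qed

lemma Fm_mono:
  assumes m: "m > 1/2" and st: "0 \<le> s" "s \<le> t"
  shows "Fm m s \<le> Fm m t"
proof -
  define h where "h x = dens m x * (ln (1 + (x - t)\<^sup>2) - ln (1 + (x - s)\<^sup>2))" for x
  have ih: "integrable lborel h"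
    unfolding h_def right_diff_distrib using int_dens_Y[OF m] by auto
  have ihR: "integrable lborel (\<lambda>x. h ((s + t) + (-1) * x))"
    using ih lborel_integrable_real_affine_iff[of "-1" h "s + t"] by simp
  have D: "Fm m t - Fm m s = (\<integral>x. h x \<partial>lborel)"
    unfolding Fm_alt h_def right_diff_distrib using int_dens_Y[OF m]
    by (subst Bochner_Integration.integral_diff) auto
  have R: "(\<integral>x. h x \<partial>lborel) = (\<integral>x. h ((s + t) + (-1) * x) \<partial>lborel)"
    using lborel_integral_real_affine[of "-1" h "s + t"] by simp
  have "2 * (Fm m t - Fm m s) = (\<integral>x. h x \<partial>lborel) + (\<integral>x. h ((s + t) + (-1) * x) \<partial>lborel)"
    using D R by simp
  also have "\<dots> = (\<integral>x. h x + h ((s + t) + (-1) * x) \<partial>lborel)"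
    using ih ihR by (simp add: Bochner_Integration.integral_add)
  finally have E: "2 * (Fm m t - Fm m s) = (\<integral>x. h x + h ((s + t) + (-1) * x) \<partial>lborel)" .
  have "0 \<le> (\<integral>x. h x + h ((s + t) + (-1) * x) \<partial>lborel)"
  proof (rule Bochner_Integration.integral_nonneg)
    fix x :: real
    define R where "R = s + t - x"
    have hR: "h ((s + t) + (-1) * x) = dens m R * (ln (1 + (x - s)\<^sup>2) - ln (1 + (x - t)\<^sup>2))"
      unfolding h_def R_def by (simp add: power2_commute algebra_simps)
    have eq: "h x + h ((s + t) + (-1) * x) =
      (dens m x - dens m R) * (ln (1 + (x - t)\<^sup>2) - ln (1 + (x - s)\<^sup>2))"
      unfolding hR by (simp add: h_def algebra_simps)
    have key: "(x - s)\<^sup>2 - (x - t)\<^sup>2 = (t - s) * (2 * x - s - t)"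
      by (simp add: power2_eq_square algebra_simps)
    show "0 \<le> h x + h ((s + t) + (-1) * x)"
    proof (cases "2 * x \<ge> s + t")
      case True
      have "\<bar>R\<bar> \<le> \<bar>x\<bar>" unfolding R_def using True st by auto
      hence a: "dens m x - dens m R \<le> 0" using dens_mono[of m R x] m by simp
      have "0 \<le> (t - s) * (2 * x - s - t)" using True st by (intro mult_nonneg_nonneg) auto
      hence "(x - t)\<^sup>2 \<le> (x - s)\<^sup>2" using key by linarith
      hence b: "ln (1 + (x - t)\<^sup>2) - ln (1 + (x - s)\<^sup>2) \<le> 0"
        by (simp add: add_pos_nonneg)
      show ?thesis unfolding eq using a b by (rule mult_nonpos_nonpos)
    next
      case False
      have "\<bar>x\<bar> \<le> \<bar>R\<bar>" unfolding R_def using False st by auto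
      hence a: "dens m x - dens m R \<ge> 0" using dens_mono[of m x R] m by simp
      have "(t - s) * (2 * x - s - t) \<le> 0" using False st by (intro mult_nonneg_nonpos) auto
      hence "(x - s)\<^sup>2 \<le> (x - t)\<^sup>2" using key by linarith
      hence b: "ln (1 + (x - t)\<^sup>2) - ln (1 + (x - s)\<^sup>2) \<ge> 0"
        by (simp add: add_pos_nonneg)
      show ?thesis unfolding eq using a b by (rule mult_nonneg_nonneg)
    qed
  qed
  thus ?thesis using E by simp
qed

lemma Fm_ge_r:
  assumes m: "m > 1/2" and r: "r > 0" and t: "\<bar>t\<bar> \<ge> r"
  shows "Fm m r \<le> Fm m t"
proof (cases "t \<ge> 0")
  case True thus ?thesis using Fm_mono[OF m, of r t] r t by simp
next
  case False
  hence "Fm m r \<le> Fm m (- t)" using Fm_mono[OF m, of r "-t"] r t by simp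
  thus ?thesis by (simp add: Fm_even)
qed



locale iidnu = prob_space M for M :: "'a measure" +
  fixes X :: "nat \<Rightarrow> 'a \<Rightarrow> real" and m :: real
  assumes m: "m > 1/2"
  assumes Xm: "\<And>i. i \<ge> 1 \<Longrightarrow> X i \<in> borel_measurable M"
  assumes Xd: "\<And>i. i \<ge> 1 \<Longrightarrow> distr M borel (X i) = nu m"
  assumes ind: "indep_vars (\<lambda>_. borel) X {1..}"
begin

lemma nu_prob: "prob_space (nu m)"
  using prob_space_distr[OF Xm[of 1]] Xd[of 1] by simp

lemma int_comp:
  fixes \<phi> :: "real \<Rightarrow> real"
  assumes "integrable (nu m) \<phi>" "\<phi> \<in> borel_measurable borel" "i \<ge> 1"
  shows "integrable M (\<lambda>\<omega>. \<phi> (X i \<omega>))"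
proof -
  have Xi: "X i \<in> borel_measurable M" using Xm assms(3) by simp
  have "integrable (distr M borel (X i)) \<phi>" using assms Xd by simp
  thus ?thesis using integrable_distr_eq[OF Xi assms(2)] by simp
qed

lemma exp_comp:
  fixes \<phi> :: "real \<Rightarrow> real"
  assumes "\<phi> \<in> borel_measurable borel" "i \<ge> 1"
  shows "expectation (\<lambda>\<omega>. \<phi> (X i \<omega>)) = integral\<^sup>L (nu m) \<phi>"
proof -
  have "integral\<^sup>L (nu m) \<phi> = integral\<^sup>L (distr M borel (X i)) \<phi>" using assms Xd by simp
  also have "\<dots> = expectation (\<lambda>\<omega>. \<phi> (X i \<omega>))"
    by (rule integral_distr) (use Xm assms in auto)
  finally show ?thesis by simp
qed

lemma indep_comp:
  fixes \<phi> :: "real \<Rightarrow> real"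
  assumes "\<phi> \<in> borel_measurable borel"
  shows "indep_vars (\<lambda>_. borel) (\<lambda>i \<omega>. \<phi> (X i \<omega>)) {1..n}"
proof -
  have I: "indep_vars (\<lambda>_. borel) X {1..n}"
    using ind by (rule indep_vars_subset) auto
  show ?thesis by (rule indep_vars_compose2[OF I]) (use assms in auto)
qed

lemma iid_chernoff:
  fixes \<phi> :: "real \<Rightarrow> real"
  assumes phim[measurable]: "\<phi> \<in> borel_measurable borel" and nn: "\<And>x. 0 \<le> \<phi> x"
    and i1: "integrable (nu m) \<phi>" and i2: "integrable (nu m) (\<lambda>x. (\<phi> x)\<^sup>2)"
    and v: "integral\<^sup>L (nu m) (\<lambda>x. (\<phi> x)\<^sup>2) \<le> \<sigma>" and sig: "\<sigma> > 0" and eps: "\<epsilon> > 0"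
    and n: "n \<ge> 1"
  shows "prob {\<omega>\<in>space M. (\<Sum>i=1..n. \<phi> (X i \<omega>)) \<le> real n * integral\<^sup>L (nu m) \<phi> - \<epsilon>}
           \<le> exp (- (\<epsilon>\<^sup>2 / (2 * real n * \<sigma>)))"
proof -
  have sq: "(\<lambda>x. (\<phi> x)\<^sup>2) \<in> borel_measurable borel" by measurable
  have "prob {\<omega>\<in>space M. (\<Sum>i\<in>{1..n}. \<phi> (X i \<omega>)) \<le> (\<Sum>i\<in>{1..n}. expectation (\<lambda>\<omega>. \<phi> (X i \<omega>))) - \<epsilon>}
           \<le> exp (- (\<epsilon>\<^sup>2 / (2 * real (card {1..n}) * \<sigma>)))"
  proof (rule chernoff_lower)
    show "indep_vars (\<lambda>_. borel) (\<lambda>i \<omega>. \<phi> (X i \<omega>)) {1..n}" by (rule indep_comp[OF phim])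
    show "{1..n} \<noteq> {}" using n by simp
    fix i assume i: "i \<in> {1..n}"
    show "integrable M (\<lambda>\<omega>. \<phi> (X i \<omega>))" using i by (intro int_comp[OF i1 phim]) auto
    show "integrable M (\<lambda>\<omega>. (\<phi> (X i \<omega>))\<^sup>2)" using i by (intro int_comp[OF i2 sq]) auto
    show "expectation (\<lambda>\<omega>. (\<phi> (X i \<omega>))\<^sup>2) \<le> \<sigma>"
      using exp_comp[OF sq, of i] i v by simp
  qed (use nn sig eps in auto)
  also have "(\<Sum>i\<in>{1..n}. expectation (\<lambda>\<omega>. \<phi> (X i \<omega>))) = real n * integral\<^sup>L (nu m) \<phi>"
    using exp_comp[OF phim] by simp
  finally show ?thesis by simp
qed

end


context iidnu begin

lemma sum_meas:
  fixes \<phi> :: "real \<Rightarrow> real"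
  assumes [measurable]: "\<phi> \<in> borel_measurable borel"
  shows "(\<lambda>\<omega>. \<Sum>i=1..n. \<phi> (X i \<omega>)) \<in> borel_measurable M"
proof (rule borel_measurable_sum)
  fix i assume "i \<in> {1..n}"
  hence [measurable]: "X i \<in> borel_measurable M" using Xm by auto
  show "(\<lambda>\<omega>. \<phi> (X i \<omega>)) \<in> borel_measurable M" by measurable
qed

lemma set_meas:
  fixes \<phi> :: "real \<Rightarrow> real"
  assumes "\<phi> \<in> borel_measurable borel"
  shows "{\<omega>\<in>space M. (\<Sum>i=1..n. \<phi> (X i \<omega>)) \<le> c} \<in> sets M"
proof -
  have [measurable]: "(\<lambda>\<omega>. \<Sum>i=1..n. \<phi> (X i \<omega>)) \<in> borel_measurable M"
    by (rule sum_meas[OF assms])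
  show ?thesis by measurable
qed

lemma second_moment:
  "integral\<^sup>L (nu m) (\<lambda>x. (ln (1 + (x - \<tau>)\<^sup>2))\<^sup>2)
     \<le> 2 * (ln 2 + ln (1 + \<tau>\<^sup>2))\<^sup>2 + 2 * integral\<^sup>L (nu m) (\<lambda>x. (ln (1 + (x - 0)\<^sup>2))\<^sup>2)"
proof -
  interpret N: prob_space "nu m" by (rule nu_prob)
  define A where "A = ln 2 + ln (1 + \<tau>\<^sup>2)"
  have A: "A \<ge> 0" unfolding A_def by simp
  have i1: "integrable (nu m) (\<lambda>x. (ln (1 + (x - \<tau>)\<^sup>2))\<^sup>2)"
    by (subst nu_integrable_iff) (auto intro: int_dens_Y2[OF m])
  have i2: "integrable (nu m) (\<lambda>x. (ln (1 + (x - 0)\<^sup>2))\<^sup>2)"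
    using int_dens_Y2[OF m, of 0] by (subst nu_integrable_iff) auto
  have "integral\<^sup>L (nu m) (\<lambda>x. (ln (1 + (x - \<tau>)\<^sup>2))\<^sup>2)
      \<le> integral\<^sup>L (nu m) (\<lambda>x. 2 * A\<^sup>2 + 2 * (ln (1 + (x - 0)\<^sup>2))\<^sup>2)"
  proof (rule integral_mono[OF i1])
    show "integrable (nu m) (\<lambda>x. 2 * A\<^sup>2 + 2 * (ln (1 + (x - 0)\<^sup>2))\<^sup>2)" using i2 by auto
    fix x :: real
    define Z where "Z = ln (1 + (x - 0)\<^sup>2)"
    have Z: "Z \<ge> 0" unfolding Z_def by simp
    have y0: "0 \<le> ln (1 + (x - \<tau>)\<^sup>2)" by simp
    have y1: "ln (1 + (x - \<tau>)\<^sup>2) \<le> A + Z" unfolding A_def Z_def using ln_split[of x \<tau>] by simp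
    have "(ln (1 + (x - \<tau>)\<^sup>2))\<^sup>2 \<le> (A + Z)\<^sup>2" using y0 y1 by (intro power_mono) auto
    also have "\<dots> \<le> 2 * A\<^sup>2 + 2 * Z\<^sup>2"
      using sum_squares_ge_zero[of "A - Z" 0] by (simp add: power2_eq_square algebra_simps)
    finally show "(ln (1 + (x - \<tau>)\<^sup>2))\<^sup>2 \<le> 2 * A\<^sup>2 + 2 * (ln (1 + (x - 0)\<^sup>2))\<^sup>2"
      unfolding Z_def .
  qed
  also have "\<dots> = 2 * A\<^sup>2 + 2 * integral\<^sup>L (nu m) (\<lambda>x. (ln (1 + (x - 0)\<^sup>2))\<^sup>2)"
    using i2 by (simp add: N.prob_space)
  finally show ?thesis unfolding A_def .
qed

lemma point_bound:
  assumes V: "2 * (ln 2 + ln (1 + \<tau>\<^sup>2))\<^sup>2 + 2 * integral\<^sup>L (nu m) (\<lambda>x. (ln (1 + (x - 0)\<^sup>2))\<^sup>2) \<le> V"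
    and V0: "V > 0" and eps: "\<epsilon> > 0" and n: "n \<ge> 1"
  shows "prob {\<omega>\<in>space M. (\<Sum>i=1..n. ln (1 + (X i \<omega> - \<tau>)\<^sup>2)) \<le> real n * Fm m \<tau> - real n * \<epsilon>}
          \<le> exp (- (real n * \<epsilon>\<^sup>2 / (2 * V)))"
proof -
  have "prob {\<omega>\<in>space M. (\<Sum>i=1..n. (\<lambda>x. ln (1 + (x - \<tau>)\<^sup>2)) (X i \<omega>)) \<le> real n * integral\<^sup>L (nu m) (\<lambda>x. ln (1 + (x - \<tau>)\<^sup>2)) - real n * \<epsilon>}
     \<le> exp (- ((real n * \<epsilon>)\<^sup>2 / (2 * real n * V)))"
  proof (rule iid_chernoff)
    show "integrable (nu m) (\<lambda>x. ln (1 + (x - \<tau>)\<^sup>2))"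
      by (subst nu_integrable_iff) (auto intro: int_dens_Y[OF m])
    show "integrable (nu m) (\<lambda>x. (ln (1 + (x - \<tau>)\<^sup>2))\<^sup>2)"
      by (subst nu_integrable_iff) (auto intro: int_dens_Y2[OF m])
    show "integral\<^sup>L (nu m) (\<lambda>x. (ln (1 + (x - \<tau>)\<^sup>2))\<^sup>2) \<le> V"
      using second_moment[of \<tau>] V by linarith
  qed (use V0 eps n in auto)
  also have "(real n * \<epsilon>)\<^sup>2 / (2 * real n * V) = real n * \<epsilon>\<^sup>2 / (2 * V)"
    using n by (simp add: power2_eq_square field_simps)
  finally show ?thesis by (simp add: Fm_def)
qed

lemma Ln_lip:
  assumes n: "n \<ge> 1"
  shows "\<bar>Ln X n t \<omega> - Ln X n \<tau> \<omega>\<bar> \<le> \<bar>t - \<tau>\<bar>"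
proof -
  have "\<bar>(\<Sum>i=1..n. ln (1 + (X i \<omega> - t)\<^sup>2)) - (\<Sum>i=1..n. ln (1 + (X i \<omega> - \<tau>)\<^sup>2))\<bar>
      = \<bar>\<Sum>i=1..n. ln (1 + (X i \<omega> - t)\<^sup>2) - ln (1 + (X i \<omega> - \<tau>)\<^sup>2)\<bar>"
    by (simp add: sum_subtractf)
  also have "\<dots> \<le> (\<Sum>i=1..n. \<bar>ln (1 + (X i \<omega> - t)\<^sup>2) - ln (1 + (X i \<omega> - \<tau>)\<^sup>2)\<bar>)"
    by (rule sum_abs)
  also have "\<dots> \<le> (\<Sum>i=1..n. \<bar>t - \<tau>\<bar>)"
  proof (rule sum_mono)
    fix i
    show "\<bar>ln (1 + (X i \<omega> - t)\<^sup>2) - ln (1 + (X i \<omega> - \<tau>)\<^sup>2)\<bar> \<le> \<bar>t - \<tau>\<bar>"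
      using ln1p_sq_lip[of "X i \<omega> - t" "X i \<omega> - \<tau>"] by (simp add: abs_minus_commute)
  qed
  also have "\<dots> = real n * \<bar>t - \<tau>\<bar>" by simp
  finally have S: "\<bar>(\<Sum>i=1..n. ln (1 + (X i \<omega> - t)\<^sup>2)) - (\<Sum>i=1..n. ln (1 + (X i \<omega> - \<tau>)\<^sup>2))\<bar> \<le> real n * \<bar>t - \<tau>\<bar>" .
  have "Ln X n t \<omega> - Ln X n \<tau> \<omega> = (1 / real n) * ((\<Sum>i=1..n. ln (1 + (X i \<omega> - t)\<^sup>2)) - (\<Sum>i=1..n. ln (1 + (X i \<omega> - \<tau>)\<^sup>2)))"
    unfolding Ln_def by (simp add: right_diff_distrib)
  hence "\<bar>Ln X n t \<omega> - Ln X n \<tau> \<omega>\<bar> = (1 / real n) * \<bar>(\<Sum>i=1..n. ln (1 + (X i \<omega> - t)\<^sup>2)) - (\<Sum>i=1..n. ln (1 + (X i \<omega> - \<tau>)\<^sup>2))\<bar>"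
    by (simp add: abs_mult)
  also have "\<dots> \<le> (1 / real n) * (real n * \<bar>t - \<tau>\<bar>)"
    using S by (intro mult_left_mono) auto
  also have "\<dots> = \<bar>t - \<tau>\<bar>" using n by simp
  finally show ?thesis .
qed

end


lemma T_sq:
  assumes "ell > 0" "T = 2 * sqrt (exp ell - 1)"
  shows "(T / 2)\<^sup>2 = exp ell - 1" "T \<ge> 0"
proof -
  have "exp ell \<ge> 1" using assms by simp
  thus "(T / 2)\<^sup>2 = exp ell - 1" using assms by simp
  show "T \<ge> 0" using assms by simp
qed

lemma ln_ge_ell:
  assumes "ell > 0" "T = 2 * sqrt (exp ell - 1)" "\<bar>y\<bar> \<ge> T / 2"
  shows "ln (1 + y\<^sup>2) \<ge> ell"
proof -
  have "(T/2)\<^sup>2 \<le> y\<^sup>2" using assms T_sq[OF assms(1,2)]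
    by (intro abs_le_square_iff[THEN iffD1]) auto
  hence "exp ell \<le> 1 + y\<^sup>2" using T_sq[OF assms(1,2)] by simp
  hence "ln (exp ell) \<le> ln (1 + y\<^sup>2)" by (intro ln_mono) auto
  thus ?thesis by simp
qed

lemma ln_gt_ell:
  assumes "ell > 0" "T = 2 * sqrt (exp ell - 1)" "\<bar>y\<bar> > T / 2"
  shows "ln (1 + y\<^sup>2) > ell"
proof -
  have "(T/2)\<^sup>2 < \<bar>y\<bar>\<^sup>2" using assms T_sq[OF assms(1,2)]
    by (intro power_strict_mono) auto
  hence "(T/2)\<^sup>2 < y\<^sup>2" by simp
  hence "exp ell < 1 + y\<^sup>2" using T_sq[OF assms(1,2)] by simp
  hence "ln (exp ell) < ln (1 + y\<^sup>2)" by (subst ln_less_cancel_iff) (auto intro: add_pos_nonneg)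
  thus ?thesis by simp
qed

context iidnu begin

lemma tail_lower:
  assumes l: "ell > 0" and T: "T = 2 * sqrt (exp ell - 1)" and t: "\<bar>t\<bar> \<ge> T"
  shows "ell * (\<Sum>i=1..n. (\<lambda>x. if \<bar>x\<bar> \<le> T/2 then 1 else 0::real) (X i \<omega>))
          \<le> (\<Sum>i=1..n. ln (1 + (X i \<omega> - t)\<^sup>2))"
  unfolding sum_distrib_left
proof (rule sum_mono)
  fix i
  show "ell * (if \<bar>X i \<omega>\<bar> \<le> T/2 then 1 else 0) \<le> ln (1 + (X i \<omega> - t)\<^sup>2)"
  proof (cases "\<bar>X i \<omega>\<bar> \<le> T/2")
    case True
    hence "\<bar>X i \<omega> - t\<bar> \<ge> T/2" using t by linarith
    thus ?thesis using True ln_ge_ell[OF l T] by simp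
  qed simp
qed

lemma tail_bound:
  assumes l: "ell > 0" "4 * Fm m 0 \<le> ell" and T: "T = 2 * sqrt (exp ell - 1)" and n: "n \<ge> 1"
  shows "prob {\<omega>\<in>space M. (\<Sum>i=1..n. (\<lambda>x. if \<bar>x\<bar> \<le> T/2 then 1 else 0::real) (X i \<omega>)) \<le> real n / 2}
          \<le> exp (- (real n / 32))"
proof -
  interpret N: prob_space "nu m" by (rule nu_prob)
  define \<phi> where "\<phi> = (\<lambda>x::real. if \<bar>x\<bar> \<le> T/2 then 1 else 0::real)"
  have phim[measurable]: "\<phi> \<in> borel_measurable borel" unfolding \<phi>_def by measurable
  have phin: "\<phi> \<in> borel_measurable (nu m)" unfolding nu_alt using phim by simp
  have phin2: "(\<lambda>x. (\<phi> x)\<^sup>2) \<in> borel_measurable (nu m)" using phin by measurable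
  have ip: "integrable (nu m) \<phi>"
    by (rule N.integrable_const_bound[where B=1]) (use phin in \<open>auto simp: \<phi>_def\<close>)
  have ip2: "integrable (nu m) (\<lambda>x. (\<phi> x)\<^sup>2)"
    by (rule N.integrable_const_bound[where B=1]) (use phin2 in \<open>auto simp: \<phi>_def\<close>)
  have iZ: "integrable (nu m) (\<lambda>x. ln (1 + (x - 0)\<^sup>2))"
    using int_dens_Y[OF m, of 0] by (subst nu_integrable_iff) auto
  have "integral\<^sup>L (nu m) (\<lambda>x. 1 - ln (1 + (x - 0)\<^sup>2) / ell) \<le> integral\<^sup>L (nu m) \<phi>"
  proof (rule integral_mono[OF _ ip])
    show "integrable (nu m) (\<lambda>x. 1 - ln (1 + (x - 0)\<^sup>2) / ell)" using iZ by auto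
    fix x :: real
    show "1 - ln (1 + (x - 0)\<^sup>2) / ell \<le> \<phi> x"
    proof (cases "\<bar>x\<bar> \<le> T/2")
      case True thus ?thesis using l by (simp add: \<phi>_def)
    next
      case False
      hence "ln (1 + x\<^sup>2) > ell" using ln_gt_ell[OF l(1) T] by simp
      thus ?thesis using False l by (simp add: \<phi>_def field_simps)
    qed
  qed
  also have "integral\<^sup>L (nu m) (\<lambda>x. 1 - ln (1 + (x - 0)\<^sup>2) / ell) = 1 - Fm m 0 / ell"
    using iZ by (simp add: Fm_def N.prob_space)
  finally have p: "1 - Fm m 0 / ell \<le> integral\<^sup>L (nu m) \<phi>" .
  have "Fm m 0 / ell \<le> 1/4" using l by (simp add: field_simps)
  hence p34: "integral\<^sup>L (nu m) \<phi> \<ge> 3/4" using p by linarith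
  have v: "integral\<^sup>L (nu m) (\<lambda>x. (\<phi> x)\<^sup>2) \<le> 1"
  proof -
    have "integral\<^sup>L (nu m) (\<lambda>x. (\<phi> x)\<^sup>2) \<le> integral\<^sup>L (nu m) (\<lambda>x. 1)"
      by (rule integral_mono[OF ip2]) (auto simp: \<phi>_def)
    thus ?thesis by (simp add: N.prob_space)
  qed
  have sub: "{\<omega>\<in>space M. (\<Sum>i=1..n. \<phi> (X i \<omega>)) \<le> real n / 2}
      \<subseteq> {\<omega>\<in>space M. (\<Sum>i=1..n. \<phi> (X i \<omega>)) \<le> real n * integral\<^sup>L (nu m) \<phi> - real n / 4}"
  proof -
    have "real n / 2 \<le> real n * integral\<^sup>L (nu m) \<phi> - real n / 4"
      using p34 mult_left_mono[OF p34, of "real n"] by simp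
    thus ?thesis by auto
  qed
  have "prob {\<omega>\<in>space M. (\<Sum>i=1..n. \<phi> (X i \<omega>)) \<le> real n / 2}
      \<le> prob {\<omega>\<in>space M. (\<Sum>i=1..n. \<phi> (X i \<omega>)) \<le> real n * integral\<^sup>L (nu m) \<phi> - real n / 4}"
    by (rule finite_measure_mono[OF sub set_meas[OF phim]])
  also have "\<dots> \<le> exp (- ((real n / 4)\<^sup>2 / (2 * real n * 1)))"
    by (rule iid_chernoff[OF phim _ ip ip2 v]) (use n in \<open>auto simp: \<phi>_def\<close>)
  also have "(real n / 4)\<^sup>2 / (2 * real n * 1) = real n / 32"
    using n by (simp add: power2_eq_square field_simps)
  finally show ?thesis unfolding \<phi>_def .
qed

end


lemma Fm_nonneg: "Fm m t \<ge> 0"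
  unfolding Fm_alt by (rule Bochner_Integration.integral_nonneg) (simp add: dens_nonneg)

lemma final_arith:
  fixes V c \<delta> D :: real and K n :: nat
  assumes V: "V > 0" and c: "c \<ge> V / 72" "c \<ge> 4 * D\<^sup>2" and d: "0 < \<delta>" "\<delta> < D"
    and nN: "real n \<ge> V * ln (2 * real K + 2) / (9 * \<delta>\<^sup>2)"
  shows "(2 * real K + 2) * exp (- (real n * (6 * \<delta>)\<^sup>2 / (2 * V))) + exp (- (real n / 32))
          \<le> 2 * exp (- (\<delta>\<^sup>2 / (8 * c)) * real n)"
proof -
  have c0: "c > 0" using c V by linarith
  define q where "q = 9 * real n * \<delta>\<^sup>2 / V"
  define \<rho> where "\<rho> = \<delta>\<^sup>2 / (8 * c)"
  have E1: "real n * (6 * \<delta>)\<^sup>2 / (2 * V) = q + q"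
    unfolding q_def by (simp add: power2_eq_square field_simps)
  have "ln (2 * real K + 2) \<le> q"
  proof -
    have "V * ln (2 * real K + 2) / (9 * \<delta>\<^sup>2) * (9 * \<delta>\<^sup>2 / V) = ln (2 * real K + 2)"
      using V d by (simp add: field_simps)
    moreover have "V * ln (2 * real K + 2) / (9 * \<delta>\<^sup>2) * (9 * \<delta>\<^sup>2 / V) \<le> real n * (9 * \<delta>\<^sup>2 / V)"
      using nN V d by (intro mult_right_mono) auto
    ultimately have "ln (2 * real K + 2) \<le> real n * (9 * \<delta>\<^sup>2 / V)" by linarith
    moreover have "real n * (9 * \<delta>\<^sup>2 / V) = 9 * real n * \<delta>\<^sup>2 / V" by simp
    ultimately show ?thesis unfolding q_def by linarith
  qed
  hence "exp (ln (2 * real K + 2)) \<le> exp q" by (simp only: exp_le_cancel_iff)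
  moreover have "exp (ln (2 * real K + 2)) = 2 * real K + 2"
    by (rule exp_ln) simp
  ultimately have "2 * real K + 2 \<le> exp q" by simp
  hence A: "(2 * real K + 2) * exp (- q) \<le> 1"
    by (simp add: exp_minus field_simps)
  have "\<rho> \<le> 9 * \<delta>\<^sup>2 / V"
  proof -
    have "V / 9 \<le> 8 * c" using c by simp
    hence "\<delta>\<^sup>2 / (8 * c) \<le> \<delta>\<^sup>2 / (V / 9)" using V d
      by (intro divide_left_mono) auto
    thus ?thesis unfolding \<rho>_def by simp
  qed
  hence "\<rho> * real n \<le> 9 * \<delta>\<^sup>2 / V * real n" by (rule mult_right_mono) simp
  moreover have "9 * \<delta>\<^sup>2 / V * real n = q" unfolding q_def by simp
  ultimately have rq: "\<rho> * real n \<le> q" by simp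
  have "(2 * real K + 2) * exp (- (real n * (6 * \<delta>)\<^sup>2 / (2 * V)))
      = ((2 * real K + 2) * exp (- q)) * exp (- q)"
    unfolding E1 by (simp add: exp_add[symmetric] algebra_simps)
  also have "\<dots> \<le> 1 * exp (- q)"
    using A by (intro mult_right_mono) auto
  also have "\<dots> \<le> exp (- \<rho> * real n)" using rq by simp
  finally have P1: "(2 * real K + 2) * exp (- (real n * (6 * \<delta>)\<^sup>2 / (2 * V))) \<le> exp (- \<rho> * real n)" .
  have "\<rho> \<le> 1/32"
  proof -
    have "\<delta>\<^sup>2 \<le> D\<^sup>2" using d by (intro power_mono) auto
    have "\<delta>\<^sup>2 / (8 * c) \<le> D\<^sup>2 / (8 * c)" using \<open>\<delta>\<^sup>2 \<le> D\<^sup>2\<close> c0 by (intro divide_right_mono) auto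
    also have "\<dots> \<le> 1/32" using c c0 by (simp add: field_simps)
    finally show ?thesis unfolding \<rho>_def .
  qed
  hence "\<rho> * real n \<le> 1/32 * real n" by (rule mult_right_mono) simp
  hence "\<rho> * real n \<le> real n / 32" by simp
  hence P2: "exp (- (real n / 32)) \<le> exp (- \<rho> * real n)" by simp
  show ?thesis using P1 P2 unfolding \<rho>_def by linarith
qed



theorem lemma5p3:
  fixes m :: real
  assumes "m > 1/2"
  shows "\<exists>c>0. \<forall>r>0. \<forall>\<delta>. 0 < \<delta> \<and> \<delta> < lam m r \<longrightarrow>
           (\<exists>N::nat. \<forall>n\<ge>N. \<forall>(M::'a measure) (X::nat \<Rightarrow> 'a \<Rightarrow> real).
              prob_space M \<and>
              (\<forall>i\<ge>1. X i \<in> borel_measurable M \<and> distr M borel (X i) = nu m) \<and>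
              prob_space.indep_vars M (\<lambda>_. borel) X {1..}
              \<longrightarrow> measure M {\<omega> \<in> space M.
                     (INF t\<in>{t. \<bar>t\<bar> \<ge> r}. Ln X n t \<omega>) < Fm m 0 + \<delta>}
                   \<le> 2 * exp (- (\<delta>\<^sup>2 / (8 * c)) * real n))"
proof -
  define D where "D = (m - 1/2) / 4"
  have D: "D > 0" using assms by (simp add: D_def)
  define F0 where "F0 = Fm m 0"
  have F0: "F0 \<ge> 0" unfolding F0_def by (rule Fm_nonneg)
  define ell where "ell = 4 * (F0 + D) + 1"
  have ell: "ell > 0" "4 * Fm m 0 \<le> ell" using F0 D by (auto simp: ell_def F0_def)
  have ell_half: "F0 + D \<le> ell / 2" unfolding ell_def using F0 D by simp
  define T where "T = 2 * sqrt (exp ell - 1)"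
  have T0: "T \<ge> 0" using T_sq[OF ell(1) T_def] by simp
  define EZ2 where "EZ2 = integral\<^sup>L (nu m) (\<lambda>x. (ln (1 + (x - 0)\<^sup>2))\<^sup>2)"
  have EZ2: "EZ2 \<ge> 0" unfolding EZ2_def
    by (subst nu_integral) (auto intro!: Bochner_Integration.integral_nonneg simp: dens_nonneg)
  define Amax where "Amax = ln 2 + ln (1 + T\<^sup>2)"
  define V where "V = 2 * Amax\<^sup>2 + 2 * EZ2 + 1"
  have V: "V > 0" unfolding V_def using EZ2 by (simp add: add_nonneg_pos)
  define c where "c = max (V / 72) (4 * D\<^sup>2)"
  have c: "c > 0" "c \<ge> V / 72" "c \<ge> 4 * D\<^sup>2" using V by (auto simp: c_def)
  show ?thesis
  proof (intro exI[of _ c] conjI allI impI)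
    show "c > 0" by (rule c(1))
    fix r \<delta> :: real
    assume r: "r > 0" and dl: "0 < \<delta> \<and> \<delta> < lam m r"
    have d0: "\<delta> > 0" using dl by simp
    have dD: "\<delta> < D" using dl by (simp add: lam_def D_def)
    have dF: "8 * \<delta> < Fm m r - F0" using dl by (simp add: lam_def F0_def)
    define K where "K = nat \<lceil>(T - r) / \<delta>\<rceil>"
    define \<tau> where "\<tau> = (\<lambda>(k::nat, b::bool). (if b then 1 else -1) * (r + real k * \<delta>))"
    define J where "J = {j \<in> {..K} \<times> (UNIV::bool set). \<bar>\<tau> j\<bar> \<le> T}"
    have finJ: "finite J" unfolding J_def by auto
    have "card J \<le> card ({..K} \<times> (UNIV::bool set))"
      unfolding J_def by (intro card_mono) auto
    hence cardJ: "real (card J) \<le> 2 * real K + 2" by (simp add: card_cartesian_product)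
    define N where "N = max 1 (nat \<lceil>V * ln (2 * real K + 2) / (9 * \<delta>\<^sup>2)\<rceil>)"
    show "\<exists>N::nat. \<forall>n\<ge>N. \<forall>(M::'a measure) (X::nat \<Rightarrow> 'a \<Rightarrow> real).
              prob_space M \<and>
              (\<forall>i\<ge>1. X i \<in> borel_measurable M \<and> distr M borel (X i) = nu m) \<and>
              prob_space.indep_vars M (\<lambda>_. borel) X {1..}
              \<longrightarrow> measure M {\<omega> \<in> space M.
                     (INF t\<in>{t. \<bar>t\<bar> \<ge> r}. Ln X n t \<omega>) < Fm m 0 + \<delta>}
                   \<le> 2 * exp (- (\<delta>\<^sup>2 / (8 * c)) * real n)"
    proof (intro exI[of _ N] allI impI)
      fix n :: nat and M :: "'a measure" and X :: "nat \<Rightarrow> 'a \<Rightarrow> real"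
      assume nN: "n \<ge> N"
      assume H: "prob_space M \<and>
              (\<forall>i\<ge>1. X i \<in> borel_measurable M \<and> distr M borel (X i) = nu m) \<and>
              prob_space.indep_vars M (\<lambda>_. borel) X {1..}"
      have PM: "prob_space M" using H by blast
      have HX: "\<forall>i\<ge>1. X i \<in> borel_measurable M \<and> distr M borel (X i) = nu m" using H by blast
      have HI: "prob_space.indep_vars M (\<lambda>_. borel) X {1..}" using H by blast
      interpret iidnu M X m
      proof (rule iidnu.intro[OF PM], rule iidnu_axioms.intro)
        show "m > 1/2" by (rule assms)
        show "X i \<in> borel_measurable M" if "i \<ge> 1" for i using HX that by blast
        show "distr M borel (X i) = nu m" if "i \<ge> 1" for i using HX that by blast
        show "prob_space.indep_vars M (\<lambda>_. borel) X {1..}" by (rule HI)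
      qed
      have n1: "n \<ge> 1" using nN by (simp add: N_def)
      have nreal: "real n \<ge> V * ln (2 * real K + 2) / (9 * \<delta>\<^sup>2)"
      proof -
        have "V * ln (2 * real K + 2) / (9 * \<delta>\<^sup>2) \<le> real (nat \<lceil>V * ln (2 * real K + 2) / (9 * \<delta>\<^sup>2)\<rceil>)"
          by linarith
        also have "\<dots> \<le> real n" using nN by (simp add: N_def)
        finally show ?thesis .
      qed
      define \<phi>B where "\<phi>B = (\<lambda>x::real. if \<bar>x\<bar> \<le> T/2 then 1 else 0::real)"
      have \<phi>Bm: "\<phi>B \<in> borel_measurable borel" unfolding \<phi>B_def by measurable
      define Bad where "Bad j = {\<omega>\<in>space M. (\<Sum>i=1..n. ln (1 + (X i \<omega> - \<tau> j)\<^sup>2))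
                                 \<le> real n * Fm m (\<tau> j) - real n * (6 * \<delta>)}" for j
      define Bt where "Bt = {\<omega>\<in>space M. (\<Sum>i=1..n. \<phi>B (X i \<omega>)) \<le> real n / 2}"
      have Bad_meas: "Bad j \<in> sets M" for j
        unfolding Bad_def by (rule set_meas) measurable
      have Bt_meas: "Bt \<in> sets M"
        unfolding Bt_def by (rule set_meas[OF \<phi>Bm])
      have sumLn: "(\<Sum>i=1..n. ln (1 + (X i \<omega> - t)\<^sup>2)) = real n * Ln X n t \<omega>" for t \<omega>
        using n1 unfolding Ln_def by simp
      have pBad: "prob (Bad j) \<le> exp (- (real n * (6 * \<delta>)\<^sup>2 / (2 * V)))" if j: "j \<in> J" for j
        unfolding Bad_def
      proof (rule point_bound[OF _ V _ n1])
        have tj: "\<bar>\<tau> j\<bar> \<le> T" using j by (simp add: J_def)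
        hence "\<bar>\<tau> j\<bar> \<le> \<bar>T\<bar>" using T0 by simp
        hence "(\<tau> j)\<^sup>2 \<le> T\<^sup>2" by (simp only: abs_le_square_iff)
        hence "ln (1 + (\<tau> j)\<^sup>2) \<le> ln (1 + T\<^sup>2)" by (intro ln_mono) (auto intro: add_pos_nonneg)
        hence "ln 2 + ln (1 + (\<tau> j)\<^sup>2) \<le> Amax" unfolding Amax_def by simp
        moreover have "0 \<le> ln 2 + ln (1 + (\<tau> j)\<^sup>2)" by simp
        ultimately have "(ln 2 + ln (1 + (\<tau> j)\<^sup>2))\<^sup>2 \<le> Amax\<^sup>2" by (intro power_mono) auto
        thus "2 * (ln 2 + ln (1 + (\<tau> j)\<^sup>2))\<^sup>2 + 2 * integral\<^sup>L (nu m) (\<lambda>x. (ln (1 + (x - 0)\<^sup>2))\<^sup>2) \<le> V"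
          unfolding V_def EZ2_def[symmetric] by simp
      qed (use d0 in simp)
      have pBt: "prob Bt \<le> exp (- (real n / 32))"
        unfolding Bt_def \<phi>B_def by (rule tail_bound[OF ell T_def n1])
      have incl: "{\<omega> \<in> space M. (INF t\<in>{t. \<bar>t\<bar> \<ge> r}. Ln X n t \<omega>) < Fm m 0 + \<delta>}
                   \<subseteq> (\<Union>j\<in>J. Bad j) \<union> Bt"
      proof
        fix \<omega> assume w: "\<omega> \<in> {\<omega> \<in> space M. (INF t\<in>{t. \<bar>t\<bar> \<ge> r}. Ln X n t \<omega>) < Fm m 0 + \<delta>}"
        hence wS: "\<omega> \<in> space M" by simp
        have "r \<in> {t. \<bar>t\<bar> \<ge> r}" using r by simp
        hence ne: "(\<lambda>t. Ln X n t \<omega>) ` {t. \<bar>t\<bar> \<ge> r} \<noteq> {}" by blast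
        from cInf_lessD[OF ne] w obtain t where t: "\<bar>t\<bar> \<ge> r" and Lt: "Ln X n t \<omega> < F0 + \<delta>"
          by (auto simp: F0_def)
        show "\<omega> \<in> (\<Union>j\<in>J. Bad j) \<union> Bt"
        proof (cases "\<bar>t\<bar> \<ge> T")
          case True
          have "\<omega> \<in> Bt"
          proof (rule ccontr)
            assume "\<omega> \<notin> Bt"
            hence gt: "(\<Sum>i=1..n. \<phi>B (X i \<omega>)) > real n / 2" using wS by (auto simp: Bt_def)
            have "ell * (\<Sum>i=1..n. \<phi>B (X i \<omega>)) \<le> (\<Sum>i=1..n. ln (1 + (X i \<omega> - t)\<^sup>2))"
              unfolding \<phi>B_def by (rule tail_lower[OF ell(1) T_def True])
            also have "\<dots> = real n * Ln X n t \<omega>" by (rule sumLn)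
            finally have "ell * (\<Sum>i=1..n. \<phi>B (X i \<omega>)) \<le> real n * Ln X n t \<omega>" .
            moreover have "ell * (real n / 2) < ell * (\<Sum>i=1..n. \<phi>B (X i \<omega>))"
              using gt ell by simp
            ultimately have "ell * (real n / 2) < real n * Ln X n t \<omega>" by linarith
            hence "real n * (ell / 2) < real n * Ln X n t \<omega>" by (simp add: algebra_simps)
            hence "ell / 2 < Ln X n t \<omega>" using n1 by (simp add: mult_less_cancel_left)
            moreover have "F0 + \<delta> \<le> ell / 2" using ell_half dD by linarith
            ultimately show False using Lt by simp
          qed
          thus ?thesis by simp
        next
          case False
          define u where "u = \<bar>t\<bar>"
          have u: "r \<le> u" "u < T" using t False by (auto simp: u_def)
          define k where "k = nat \<lfloor>(u - r) / \<delta>\<rfloor>"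
          have q0: "(u - r) / \<delta> \<ge> 0" using u d0 by simp
          have kq: "real k = of_int \<lfloor>(u - r) / \<delta>\<rfloor>" unfolding k_def using q0 by simp
          have k1: "real k * \<delta> \<le> u - r"
          proof -
            have "real k \<le> (u - r) / \<delta>" unfolding kq by linarith
            thus ?thesis using d0 by (simp add: field_simps)
          qed
          have k2: "u - r < real k * \<delta> + \<delta>"
          proof -
            have "(u - r) / \<delta> < real k + 1" unfolding kq by linarith
            thus ?thesis using d0 by (simp add: field_simps)
          qed
          have kK: "k \<le> K"
          proof -
            have "(u - r) / \<delta> \<le> (T - r) / \<delta>" using u d0 by (simp add: divide_right_mono)
            hence "\<lfloor>(u - r) / \<delta>\<rfloor> \<le> \<lceil>(T - r) / \<delta>\<rceil>" by linarith
            thus ?thesis unfolding k_def K_def by (simp add: nat_mono)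
          qed
          define j where "j = (k, t \<ge> 0)"
          have pos: "0 < r + real k * \<delta>" using r d0 by (simp add: add_pos_nonneg)
          have tauabs: "\<bar>\<tau> j\<bar> = r + real k * \<delta>"
            by (cases "t \<ge> 0") (use pos in \<open>auto simp: j_def \<tau>_def\<close>)
          have tdist: "\<bar>t - \<tau> j\<bar> < \<delta>"
          proof (cases "t \<ge> 0")
            case True thus ?thesis using k1 k2 by (simp add: j_def \<tau>_def u_def)
          next
            case False thus ?thesis using k1 k2 by (simp add: j_def \<tau>_def u_def)
          qed
          have jJ: "j \<in> J" unfolding J_def using kK tauabs k1 u by (simp add: j_def)
          have "Ln X n (\<tau> j) \<omega> \<le> Ln X n t \<omega> + \<bar>t - \<tau> j\<bar>"
            using Ln_lip[OF n1, of t \<omega> "\<tau> j"] by linarith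
          hence L1: "Ln X n (\<tau> j) \<omega> < F0 + 2 * \<delta>" using Lt tdist by linarith
          have "Fm m r \<le> Fm m (\<tau> j)"
            using Fm_ge_r[OF assms r] tauabs d0 by simp
          hence "Ln X n (\<tau> j) \<omega> \<le> Fm m (\<tau> j) - 6 * \<delta>" using L1 dF by linarith
          hence "real n * Ln X n (\<tau> j) \<omega> \<le> real n * (Fm m (\<tau> j) - 6 * \<delta>)"
            by (intro mult_left_mono) auto
          hence "(\<Sum>i=1..n. ln (1 + (X i \<omega> - \<tau> j)\<^sup>2)) \<le> real n * Fm m (\<tau> j) - real n * (6 * \<delta>)"
            unfolding sumLn by (simp add: right_diff_distrib)
          hence "\<omega> \<in> Bad j" using wS unfolding Bad_def by blast
          thus ?thesis using jJ by blast
        qed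
      qed
      have "measure M {\<omega> \<in> space M. (INF t\<in>{t. \<bar>t\<bar> \<ge> r}. Ln X n t \<omega>) < Fm m 0 + \<delta>}
             \<le> measure M ((\<Union>j\<in>J. Bad j) \<union> Bt)"
        by (rule finite_measure_mono[OF incl]) (use finJ Bad_meas Bt_meas in auto)
      also have "\<dots> \<le> measure M (\<Union>j\<in>J. Bad j) + measure M Bt"
        by (rule measure_Un_le) (use finJ Bad_meas Bt_meas in auto)
      also have "measure M (\<Union>j\<in>J. Bad j) \<le> (\<Sum>j\<in>J. measure M (Bad j))"
        by (rule finite_measure_subadditive_finite) (use finJ Bad_meas in auto)
      also have "(\<Sum>j\<in>J. measure M (Bad j)) \<le> (\<Sum>j\<in>J. exp (- (real n * (6 * \<delta>)\<^sup>2 / (2 * V))))"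
        by (rule sum_mono) (rule pBad)
      also have "\<dots> = real (card J) * exp (- (real n * (6 * \<delta>)\<^sup>2 / (2 * V)))" by simp
      also have "\<dots> \<le> (2 * real K + 2) * exp (- (real n * (6 * \<delta>)\<^sup>2 / (2 * V)))"
        by (rule mult_right_mono[OF cardJ]) simp
      finally have tot: "measure M {\<omega> \<in> space M. (INF t\<in>{t. \<bar>t\<bar> \<ge> r}. Ln X n t \<omega>) < Fm m 0 + \<delta>}
            \<le> (2 * real K + 2) * exp (- (real n * (6 * \<delta>)\<^sup>2 / (2 * V))) + exp (- (real n / 32))"
        using pBt by simp
      also have "\<dots> \<le> 2 * exp (- (\<delta>\<^sup>2 / (8 * c)) * real n)"
        by (rule final_arith[OF V c(2,3) d0 dD nreal])
      finally show "measure M {\<omega> \<in> space M. (INF t\<in>{t. \<bar>t\<bar> \<ge> r}. Ln X n t \<omega>) < Fm m 0 + \<delta>}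
                   \<le> 2 * exp (- (\<delta>\<^sup>2 / (8 * c)) * real n)" .
    qed
  qed
qed


end
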